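(* Let $(X,\tau)$ be a $T_1$ topological space. Then $X$ is a D-space if and only if for every continuous map $f:(X,\tau)\to(\mathcal P(X),\tau_{\mathcal S(X)})$ with $x\in f(x)$ for all $x\in X$, there exist a continuous neighborhood refinement map $f_*$ of $f$ and a set $D\subseteq X$ such that the map $g:(X,\tau)\to(\mathcal P(D),\tau_{\mathcal S(D)})$, $g(x)=f_*(x)\cap D$, is continuous, satisfies $g^{-1}(\{\emptyset\})=\emptyset$, and satisfies $g(d)=\{d\}$ for all $d\in D$.
   Context: For a set $A$ and $a\in A$, let $\mathcal U_A(a)=\{B\subseteq A: a\in B\}$. The principal ultrafilter topology $\tau_{\mathcal S(A)}$ on $\mathcal P(A)$ is the topology generated by the subbase $\{\mathcal U_A(a): a\in A\}$. Given a continuous map $f:(X,\tau)\to(\mathcal P(X),\tau_{\mathcal S(X)})$ with $x\in f(x)$ for all $x$, a continuous neighborhood refinement map of $f$ is a continuous map $f_*:(X,\tau)\to(\mathcal P(X),\tau_{\mathcal S(X)})$ with $x\in f_*(x)\subseteq f(x)$ for all $x$. An open neighborhood assignment is a function $N:X\to\tau$ with $x\in N(x)$ for all $x$. $X$ is a D-space if for every open neighborhood assignment $N$ there is a closed discrete $D\subseteq X$ with $\bigcup_{d\in D}N(d)=X$. *)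

theory Defs
  imports "HOL-Analysis.Analysis"
begin

definition pu_set :: "'a set \<Rightarrow> 'a \<Rightarrow> 'a set set" where
  "pu_set A a = {B. B \<subseteq> A \<and> a \<in> B}"

text \<open>Principal ultrafilter topology on Pow A, generated by the subbase {U_A(a). a \<in> A}
  (finite intersections, the empty one giving Pow A, then arbitrary unions).\<close>
definition pu_topology :: "'a set \<Rightarrow> 'a set topology" where
  "pu_topology A = topology (arbitrary union_of
      (finite intersection_of (\<lambda>U. \<exists>a\<in>A. U = pu_set A a) relative_to Pow A))"

definition open_nbhd_assignment :: "'a topology \<Rightarrow> ('a \<Rightarrow> 'a set) \<Rightarrow> bool" where
  "open_nbhd_assignment X N \<longleftrightarrow> (\<forall>x\<in>topspace X. openin X (N x) \<and> x \<in> N x)"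

definition closed_discrete :: "'a topology \<Rightarrow> 'a set \<Rightarrow> bool" where
  "closed_discrete X D \<longleftrightarrow> D \<subseteq> topspace X \<and> closedin X D \<and>
     subtopology X D = discrete_topology D"

definition D_space :: "'a topology \<Rightarrow> bool" where
  "D_space X \<longleftrightarrow> (\<forall>N. open_nbhd_assignment X N \<longrightarrow>
      (\<exists>D. closed_discrete X D \<and> (\<Union>d\<in>D. N d) = topspace X))"

definition nbhd_refinement_map :: "'a topology \<Rightarrow> ('a \<Rightarrow> 'a set) \<Rightarrow> ('a \<Rightarrow> 'a set) \<Rightarrow> bool" where
  "nbhd_refinement_map X f fs \<longleftrightarrow>
     continuous_map X (pu_topology (topspace X)) fs \<and>
     (\<forall>x\<in>topspace X. x \<in> fs x \<and> fs x \<subseteq> f x)"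

end

theory Submission imports Defs begin
lemma cont_pu:
  "continuous_map X (pu_topology A) g \<longleftrightarrow>
   (\<forall>x\<in>topspace X. g x \<subseteq> A) \<and> (\<forall>a\<in>A. openin X {x \<in> topspace X. a \<in> g x})"
proof -
  have eq: "continuous_map X (pu_topology A) g \<longleftrightarrow>
    g \<in> topspace X \<rightarrow> Pow A \<and> (\<forall>U. (\<exists>a\<in>A. U = pu_set A a) \<longrightarrow> openin X {x \<in> topspace X. g x \<in> U})"
    using continuous_map_into_topology_subbase_eq[OF pu_topology_def] unfolding pu_topology_def
    by simp
  show ?thesis
  proof
    assume L: "continuous_map X (pu_topology A) g"
    then have s: "\<forall>x\<in>topspace X. g x \<subseteq> A" using eq by auto
    moreover have "openin X {x \<in> topspace X. a \<in> g x}" if "a \<in> A" for a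
    proof -
      have "openin X {x \<in> topspace X. g x \<in> pu_set A a}" using L eq that by blast
      moreover have "{x \<in> topspace X. g x \<in> pu_set A a} = {x \<in> topspace X. a \<in> g x}"
        using s by (auto simp: pu_set_def)
      ultimately show ?thesis by simp
    qed
    ultimately show "(\<forall>x\<in>topspace X. g x \<subseteq> A) \<and> (\<forall>a\<in>A. openin X {x \<in> topspace X. a \<in> g x})" by blast
  next
    assume R: "(\<forall>x\<in>topspace X. g x \<subseteq> A) \<and> (\<forall>a\<in>A. openin X {x \<in> topspace X. a \<in> g x})"
    have "openin X {x \<in> topspace X. g x \<in> U}" if hU: "\<exists>a\<in>A. U = pu_set A a" for U
    proof -
      obtain a where a: "a \<in> A" "U = pu_set A a" using hU by blast
      have "{x \<in> topspace X. g x \<in> U} = {x \<in> topspace X. a \<in> g x}"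
        using R a by (auto simp: pu_set_def)
      then show ?thesis using R a by simp
    qed
    then show "continuous_map X (pu_topology A) g" using eq R by auto
  qed
qed

theorem mainTheorem2:
  fixes X :: "'a topology"
  assumes "t1_space X"
  shows "D_space X \<longleftrightarrow>
    (\<forall>f. continuous_map X (pu_topology (topspace X)) f \<and> (\<forall>x\<in>topspace X. x \<in> f x) \<longrightarrow>
      (\<exists>fs D. nbhd_refinement_map X f fs \<and> D \<subseteq> topspace X \<and>
         continuous_map X (pu_topology D) (\<lambda>x. fs x \<inter> D) \<and>
         (\<forall>x\<in>topspace X. fs x \<inter> D \<noteq> {}) \<and>
         (\<forall>d\<in>D. fs d \<inter> D = {d})))" (is "?L \<longleftrightarrow> ?R")
proof
  assume L: ?L
  show ?R
  proof (intro allI impI)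
    fix f assume f: "continuous_map X (pu_topology (topspace X)) f \<and> (\<forall>x\<in>topspace X. x \<in> f x)"
    then have fsub: "\<forall>x\<in>topspace X. f x \<subseteq> topspace X"
      and fop: "\<forall>a\<in>topspace X. openin X {x \<in> topspace X. a \<in> f x}"
      and fx: "\<forall>x\<in>topspace X. x \<in> f x" by (auto simp: cont_pu)
    define N where "N a = {x \<in> topspace X. a \<in> f x}" for a
    have "open_nbhd_assignment X N" using fop fx by (auto simp: open_nbhd_assignment_def N_def)
    then obtain D where D: "closed_discrete X D" and cov: "(\<Union>d\<in>D. N d) = topspace X"
      using L unfolding D_space_def by blast
    have DX: "D \<subseteq> topspace X" and Dc: "closedin X D" and Dd: "subtopology X D = discrete_topology D"
      using D by (auto simp: closed_discrete_def)
    have Dcl: "closedin X (D - {a})" for a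
    proof -
      have "closedin (subtopology X D) (D - {a})" using Dd by auto
      then show ?thesis using Dc closedin_trans_full by blast
    qed
    define fs where "fs x = {a \<in> f x. a \<in> D \<longrightarrow> x \<in> D \<longrightarrow> x = a}" for x
    have fsop: "openin X {x \<in> topspace X. a \<in> fs x}" if a: "a \<in> topspace X" for a
    proof (cases "a \<in> D")
      case True
      have "{x \<in> topspace X. a \<in> fs x} = {x \<in> topspace X. a \<in> f x} \<inter> (topspace X - (D - {a}))"
        using True by (auto simp: fs_def)
      then show ?thesis using fop a Dcl by (simp add: openin_Int openin_diff)
    next
      case False
      have "{x \<in> topspace X. a \<in> fs x} = {x \<in> topspace X. a \<in> f x}"
        using False by (auto simp: fs_def)
      then show ?thesis using fop a by simp
    qed
    have cfs: "continuous_map X (pu_topology (topspace X)) fs"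
      unfolding cont_pu using fsop fsub by (auto simp: fs_def)
    have "nbhd_refinement_map X f fs"
      unfolding nbhd_refinement_map_def using cfs fx by (auto simp: fs_def)
    moreover have "continuous_map X (pu_topology D) (\<lambda>x. fs x \<inter> D)"
      unfolding cont_pu using fsop DX by auto
    moreover have "\<forall>x\<in>topspace X. fs x \<inter> D \<noteq> {}"
    proof
      fix x assume x: "x \<in> topspace X"
      show "fs x \<inter> D \<noteq> {}"
      proof (cases "x \<in> D")
        case True then show ?thesis using fx x by (auto simp: fs_def)
      next
        case False
        then obtain d where "d \<in> D" "x \<in> N d" using cov x by blast
        then show ?thesis using False by (auto simp: fs_def N_def)
      qed
    qed
    moreover have "\<forall>d\<in>D. fs d \<inter> D = {d}" using fx DX by (auto simp: fs_def)
    ultimately show "\<exists>fs D. nbhd_refinement_map X f fs \<and> D \<subseteq> topspace X \<and>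
         continuous_map X (pu_topology D) (\<lambda>x. fs x \<inter> D) \<and>
         (\<forall>x\<in>topspace X. fs x \<inter> D \<noteq> {}) \<and>
         (\<forall>d\<in>D. fs d \<inter> D = {d})" using DX by blast
  qed
next
  assume R: ?R
  show ?L unfolding D_space_def
  proof (intro allI impI)
    fix N assume N: "open_nbhd_assignment X N"
    define f where "f x = {a \<in> topspace X. x \<in> N a}" for x
    have "continuous_map X (pu_topology (topspace X)) f"
      unfolding cont_pu
    proof (intro conjI ballI)
      fix a assume a: "a \<in> topspace X"
      have "{x \<in> topspace X. a \<in> f x} = N a" using N a openin_subset
        by (fastforce simp: f_def open_nbhd_assignment_def)
      then show "openin X {x \<in> topspace X. a \<in> f x}" using N a by (simp add: open_nbhd_assignment_def)
    qed (auto simp: f_def)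
    moreover have "\<forall>x\<in>topspace X. x \<in> f x" using N by (auto simp: f_def open_nbhd_assignment_def)
    ultimately have "\<exists>fs D. nbhd_refinement_map X f fs \<and> D \<subseteq> topspace X \<and>
         continuous_map X (pu_topology D) (\<lambda>x. fs x \<inter> D) \<and>
         (\<forall>x\<in>topspace X. fs x \<inter> D \<noteq> {}) \<and>
         (\<forall>d\<in>D. fs d \<inter> D = {d})" using R[rule_format, of f] by blast
    then obtain fs D where fs: "nbhd_refinement_map X f fs" and DX: "D \<subseteq> topspace X"
      and ne: "\<forall>x\<in>topspace X. fs x \<inter> D \<noteq> {}" and dd: "\<forall>d\<in>D. fs d \<inter> D = {d}"
      by (elim exE conjE) (rule that)
    have fsop: "\<forall>a\<in>topspace X. openin X {x \<in> topspace X. a \<in> fs x}"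
      and fsf: "\<forall>x\<in>topspace X. x \<in> fs x \<and> fs x \<subseteq> f x"
      using fs unfolding nbhd_refinement_map_def cont_pu by blast+
    define Op where "Op d = {x \<in> topspace X. d \<in> fs x}" for d
    have Oo: "openin X (Op d)" if "d \<in> D" for d using fsop DX that by (auto simp: Op_def)
    have OD: "Op d \<inter> D = {d}" if "d \<in> D" for d
    proof
      show "Op d \<inter> D \<subseteq> {d}"
      proof
        fix x assume x: "x \<in> Op d \<inter> D"
        then have "d \<in> fs x \<inter> D" using that by (auto simp: Op_def)
        moreover have "fs x \<inter> D = {x}" using dd x by simp
        ultimately show "x \<in> {d}" by simp
      qed
      show "{d} \<subseteq> Op d \<inter> D" using that DX fsf by (auto simp: Op_def)
    qed
    have cov: "(\<Union>d\<in>D. N d) = topspace X"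
    proof
      show "(\<Union>d\<in>D. N d) \<subseteq> topspace X"
      proof (rule UN_least)
        fix d assume "d \<in> D"
        then have "openin X (N d)" using N DX by (auto simp: open_nbhd_assignment_def)
        then show "N d \<subseteq> topspace X" by (rule openin_subset)
      qed
      show "topspace X \<subseteq> (\<Union>d\<in>D. N d)"
      proof
        fix x assume x: "x \<in> topspace X"
        then obtain d where "d \<in> fs x" "d \<in> D" using ne by blast
        then show "x \<in> (\<Union>d\<in>D. N d)" using fsf x by (auto simp: f_def)
      qed
    qed
    have disc0: "discrete_topology D = subtopology X D"
    proof (rule discrete_topology_unique_alt[THEN iffD2], intro conjI)
      show "topspace (subtopology X D) \<subseteq> D" by simp
      show "\<forall>x\<in>D. openin (subtopology X D) {x}"
      proof
        fix d assume d: "d \<in> D"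
        have "openin (subtopology X D) (Op d \<inter> D)" using Oo[OF d] openin_subtopology_Int by blast
        then show "openin (subtopology X D) {d}" using OD d by simp
      qed
    qed
    have disc: "subtopology X D = discrete_topology D" using disc0 by simp
    have cl: "closedin X D"
    proof -
      have "openin X (topspace X - D)"
      proof (subst openin_subopen, intro ballI)
        fix x assume x: "x \<in> topspace X - D"
        then obtain d where d: "d \<in> fs x" "d \<in> D" using ne by blast
        have "closedin X {d}" using assms d DX by (auto simp add: t1_space_closedin_singleton)
        then have "openin X (Op d - {d})" using Oo[OF d(2)] by (simp add: openin_diff)
        moreover have "x \<in> Op d - {d}" using x d by (auto simp: Op_def)
        moreover have "Op d - {d} \<subseteq> topspace X - D" using OD[OF d(2)] by (auto simp: Op_def)
        ultimately show "\<exists>T. openin X T \<and> x \<in> T \<and> T \<subseteq> topspace X - D" by blast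
      qed
      then show ?thesis using DX by (simp add: closedin_def)
    qed
    show "\<exists>D. closed_discrete X D \<and> (\<Union>d\<in>D. N d) = topspace X"
      using cov disc cl DX by (auto simp: closed_discrete_def)
  qed
qed
end
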